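(* Let $\Gamma$ be a distance-regular graph with valency $k\geq 3$, diameter $D\geq 2$ and distinct eigenvalues $\theta_0>\theta_1>\cdots>\theta_D$. If $c_2\neq 1$ and $\Gamma$ contains an induced subgraph isomorphic to a generalized quadrangle $GQ(s,c_2-1)$ for some positive integer $s$, then $\theta_1\leq \frac{k-(a_1+1)}{c_2-1}-1$.
   Context: A connected graph $\Gamma$ of diameter $D$ is distance-regular if there are integers $b_i,c_i$ ($0\le i\le D$) such that for any vertices $x,y$ at distance $i$, $y$ has exactly $c_i$ neighbours at distance $i-1$ from $x$ and $b_i$ neighbours at distance $i+1$ from $x$; $k=b_0$ and $a_i=k-b_i-c_i$. The eigenvalues are those of the adjacency matrix. A generalized quadrangle $GQ(s,t)$ (with $s,t$ positive integers) is a $K_{1,1,2}$-free distance-regular graph of diameter $2$ with intersection array $\{(t+1)s,ts;1,t+1\}$. *)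

theory Defs
  imports Complex_Main
begin

definition simple_graph :: "'a set \<Rightarrow> ('a \<Rightarrow> 'a \<Rightarrow> bool) \<Rightarrow> bool" where
  "simple_graph V E \<longleftrightarrow> finite V \<and> (\<forall>x y. E x y \<longrightarrow> x \<in> V \<and> y \<in> V)
     \<and> (\<forall>x y. E x y \<longrightarrow> E y x) \<and> (\<forall>x. \<not> E x x)"

fun walkn :: "('a \<Rightarrow> 'a \<Rightarrow> bool) \<Rightarrow> nat \<Rightarrow> 'a \<Rightarrow> 'a \<Rightarrow> bool" where
  "walkn E 0 x y = (x = y)"
| "walkn E (Suc n) x y = (\<exists>z. E x z \<and> walkn E n z y)"

definition gdist :: "('a \<Rightarrow> 'a \<Rightarrow> bool) \<Rightarrow> 'a \<Rightarrow> 'a \<Rightarrow> nat" where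
  "gdist E x y = (LEAST n. walkn E n x y)"

definition connected_graph :: "'a set \<Rightarrow> ('a \<Rightarrow> 'a \<Rightarrow> bool) \<Rightarrow> bool" where
  "connected_graph V E \<longleftrightarrow> (\<forall>x\<in>V. \<forall>y\<in>V. \<exists>n. walkn E n x y)"

definition distance_regular ::
  "'a set \<Rightarrow> ('a \<Rightarrow> 'a \<Rightarrow> bool) \<Rightarrow> (nat \<Rightarrow> nat) \<Rightarrow> (nat \<Rightarrow> nat) \<Rightarrow> nat \<Rightarrow> bool" where
  "distance_regular V E b c D \<longleftrightarrow>
     simple_graph V E \<and> connected_graph V E \<and>
     (\<forall>x\<in>V. \<forall>y\<in>V. gdist E x y \<le> D) \<and> (\<exists>x\<in>V. \<exists>y\<in>V. gdist E x y = D) \<and>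
     (\<forall>x\<in>V. \<forall>y\<in>V. \<forall>i\<le>D. gdist E x y = i \<longrightarrow>
        (1 \<le> i \<longrightarrow> card {z\<in>V. E y z \<and> gdist E x z + 1 = i} = c i) \<and>
        card {z\<in>V. E y z \<and> gdist E x z = i + 1} = b i)"

definition drg_a :: "(nat \<Rightarrow> nat) \<Rightarrow> (nat \<Rightarrow> nat) \<Rightarrow> nat \<Rightarrow> nat" where
  "drg_a b c i = b 0 - b i - c i"

definition adj_eigenvalue :: "'a set \<Rightarrow> ('a \<Rightarrow> 'a \<Rightarrow> bool) \<Rightarrow> real \<Rightarrow> bool" where
  "adj_eigenvalue V E \<theta> \<longleftrightarrow> (\<exists>f :: 'a \<Rightarrow> real. (\<exists>x\<in>V. f x \<noteq> 0) \<and>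
     (\<forall>x\<in>V. (\<Sum>y\<in>V. (if E x y then 1 else 0) * f y) = \<theta> * f x))"

definition K112_free :: "'a set \<Rightarrow> ('a \<Rightarrow> 'a \<Rightarrow> bool) \<Rightarrow> bool" where
  "K112_free V E \<longleftrightarrow> \<not> (\<exists>u\<in>V. \<exists>v\<in>V. \<exists>x\<in>V. \<exists>y\<in>V. x \<noteq> y \<and>
     E u v \<and> E u x \<and> E u y \<and> E v x \<and> E v y \<and> \<not> E x y)"

definition is_GQ :: "'a set \<Rightarrow> ('a \<Rightarrow> 'a \<Rightarrow> bool) \<Rightarrow> nat \<Rightarrow> nat \<Rightarrow> bool" where
  "is_GQ V E s t \<longleftrightarrow> 0 < s \<and> 0 < t \<and> K112_free V E \<and>
     (\<exists>b c. distance_regular V E b c 2 \<and> b 0 = (t+1)*s \<and> b 1 = t*s \<and> c 1 = 1 \<and> c 2 = t+1)"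

definition induced :: "('a \<Rightarrow> 'a \<Rightarrow> bool) \<Rightarrow> 'a set \<Rightarrow> 'a \<Rightarrow> 'a \<Rightarrow> bool" where
  "induced E S x y \<longleftrightarrow> E x y \<and> x \<in> S \<and> y \<in> S"

end

theory Submission
  imports Defs "HOL-Computational_Algebra.Fundamental_Theorem_Algebra"
begin


definition Aop :: "'a set \<Rightarrow> ('a \<Rightarrow> 'a \<Rightarrow> bool) \<Rightarrow> ('a \<Rightarrow> 'b::comm_ring_1) \<Rightarrow> 'a \<Rightarrow> 'b" where
  "Aop V E v x = (if x \<in> V then (\<Sum>y | y \<in> V \<and> E x y. v y) else 0)"

definition Apow :: "'a set \<Rightarrow> ('a \<Rightarrow> 'a \<Rightarrow> bool) \<Rightarrow> nat \<Rightarrow> ('a \<Rightarrow> 'b::comm_ring_1) \<Rightarrow> 'a \<Rightarrow> 'b" where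
  "Apow V E n v = (Aop V E ^^ n) v"

definition opoly :: "'a set \<Rightarrow> ('a \<Rightarrow> 'a \<Rightarrow> bool) \<Rightarrow> 'b::comm_ring_1 poly \<Rightarrow> ('a \<Rightarrow> 'b) \<Rightarrow> 'a \<Rightarrow> 'b" where
  "opoly V E p v = (\<lambda>x. \<Sum>i\<le>degree p. coeff p i * Apow V E i v x)"

lemma Apow_0[simp]: "Apow V E 0 v = v" by (simp add: Apow_def)
lemma Apow_Suc: "Apow V E (Suc n) v = Aop V E (Apow V E n v)" by (simp add: Apow_def)

lemma Aop_sum: "Aop V E (\<lambda>z. \<Sum>i\<in>I. c i * u i z) x = (\<Sum>i\<in>I. c i * Aop V E (u i) x)"
  unfolding Aop_def by (auto simp: sum_distrib_left intro: sum.swap)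

lemma Aop_lin: "Aop V E (\<lambda>z. a * u z + b * w z) x = a * Aop V E u x + b * Aop V E w x"
  unfolding Aop_def by (auto simp: sum_distrib_left sum.distrib)

lemma Aop_scale: "Aop V E (\<lambda>z. a * u z) x = a * Aop V E u x"
  unfolding Aop_def by (auto simp: sum_distrib_left)

lemma Aop_cong: "(\<And>z. z \<in> V \<Longrightarrow> u z = w z) \<Longrightarrow> Aop V E u = Aop V E w"
  unfolding Aop_def by (intro ext) auto

lemma Apow_sum: "Apow V E n (\<lambda>z. \<Sum>i\<in>I. c i * u i z) x = (\<Sum>i\<in>I. c i * Apow V E n (u i) x)"
proof (induction n arbitrary: x)
  case 0 then show ?case by simp
next
  case (Suc n)
  have e: "Apow V E n (\<lambda>z. \<Sum>i\<in>I. c i * u i z) = (\<lambda>x. \<Sum>i\<in>I. c i * Apow V E n (u i) x)"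
    by (rule ext) (rule Suc.IH)
  have "Apow V E (Suc n) (\<lambda>z. \<Sum>i\<in>I. c i * u i z) = Aop V E (\<lambda>x. \<Sum>i\<in>I. c i * Apow V E n (u i) x)"
    by (simp add: Apow_Suc e)
  then show ?case by (simp add: Aop_sum Apow_Suc)
qed

lemma Apow_lin: "Apow V E n (\<lambda>z. a * u z + b * w z) x = a * Apow V E n u x + b * Apow V E n w x"
proof (induction n arbitrary: x)
  case 0 then show ?case by simp
next
  case (Suc n)
  have e: "Apow V E n (\<lambda>z. a * u z + b * w z) = (\<lambda>x. a * Apow V E n u x + b * Apow V E n w x)"
    by (rule ext) (rule Suc.IH)
  have "Apow V E (Suc n) (\<lambda>z. a * u z + b * w z) = Aop V E (\<lambda>x. a * Apow V E n u x + b * Apow V E n w x)"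
    by (simp add: Apow_Suc e)
  then show ?case by (simp add: Aop_lin Apow_Suc)
qed

lemma opoly_bound:
  assumes "degree p < N"
  shows "opoly V E p v x = (\<Sum>i<N. coeff p i * Apow V E i v x)"
  unfolding opoly_def
  by (rule sum.mono_neutral_left) (use assms in \<open>auto simp: coeff_eq_0\<close>)

lemma opoly_add: "opoly V E (p + q) v x = opoly V E p v x + opoly V E q v x"
proof -
  obtain N where N: "N = Suc (max (degree p) (degree q))" by blast
  have d: "degree (p+q) < N" "degree p < N" "degree q < N" unfolding N using degree_add_le
    by (metis le_imp_less_Suc max.cobounded1 max.cobounded2 max_def)+
  have "opoly V E (p+q) v x = (\<Sum>i<N. coeff (p+q) i * Apow V E i v x)" by (rule opoly_bound[OF d(1)])
  also have "\<dots> = (\<Sum>i<N. coeff p i * Apow V E i v x) + (\<Sum>i<N. coeff q i * Apow V E i v x)"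
    by (simp add: sum.distrib distrib_right del: lessThan_Suc)
  finally show ?thesis by (simp only: opoly_bound[OF d(2)] opoly_bound[OF d(3)])
qed

lemma opoly_smult: "opoly V E (smult a p) v x = a * opoly V E p v x"
proof -
  obtain N where N: "N = Suc (degree p)" by blast
  have d: "degree (smult a p) < N" "degree p < N" unfolding N by (meson degree_smult_le le_imp_less_Suc, simp)
  have "opoly V E (smult a p) v x = (\<Sum>i<N. coeff (smult a p) i * Apow V E i v x)" by (rule opoly_bound[OF d(1)])
  also have "\<dots> = a * (\<Sum>i<N. coeff p i * Apow V E i v x)"
    by (simp add: sum_distrib_left mult.assoc del: lessThan_Suc)
  finally show ?thesis by (simp only: opoly_bound[OF d(2)])
qed

lemma opoly_0[simp]: "opoly V E 0 v = (\<lambda>x. 0)"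
  by (simp add: opoly_def)

lemma opoly_pCons: "opoly V E (pCons a p) v x = a * v x + Aop V E (opoly V E p v) x"
proof -
  define N where "N = Suc (degree p)"
  have d: "degree (pCons a p) < Suc N" unfolding N_def
    by (metis degree_pCons_le le_imp_less_Suc)
  have "opoly V E (pCons a p) v x = (\<Sum>i<Suc N. coeff (pCons a p) i * Apow V E i v x)"
    by (rule opoly_bound[OF d])
  also have "\<dots> = a * v x + (\<Sum>i<N. coeff p i * Apow V E (Suc i) v x)"
    by (subst sum.lessThan_Suc_shift) simp
  also have "(\<Sum>i<N. coeff p i * Apow V E (Suc i) v x) = Aop V E (\<lambda>z. \<Sum>i<N. coeff p i * Apow V E i v z) x"
    by (simp add: Aop_sum Apow_Suc)
  also have "(\<lambda>z. \<Sum>i<N. coeff p i * Apow V E i v z) = opoly V E p v"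
    by (rule ext, rule opoly_bound[symmetric]) (simp add: N_def)
  finally show ?thesis .
qed

lemma opoly_mult: "opoly V E (p * q) v = opoly V E p (opoly V E q v)"
proof (induction p rule: pCons_induct)
  case 0 then show ?case by simp
next
  case (pCons a p)
  show ?case
  proof
    fix x
    have "opoly V E (pCons a p * q) v x = a * opoly V E q v x + Aop V E (opoly V E (p*q) v) x"
      by (simp add: opoly_add opoly_smult opoly_pCons)
    also have "\<dots> = opoly V E (pCons a p) (opoly V E q v) x"
      by (simp add: opoly_pCons pCons.IH)
    finally show "opoly V E (pCons a p * q) v x = opoly V E (pCons a p) (opoly V E q v) x" .
  qed
qed

lemma opoly_1[simp]: "opoly V E 1 v = v"
  by (simp add: opoly_def)

lemma opoly_lin: "opoly V E [:-a, 1:] v x = Aop V E v x - a * v x"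
proof -
  have "opoly V E [:1:] v = v" using opoly_1 by (metis one_pCons)
  then show ?thesis by (simp add: opoly_pCons)
qed

lemma opoly_comm: "opoly V E p (opoly V E q v) = opoly V E q (opoly V E p v)"
  by (metis opoly_mult mult.commute)

lemma opoly_sum: "opoly V E p (\<lambda>z. \<Sum>i\<in>I. c i * u i z) x = (\<Sum>i\<in>I. c i * opoly V E p (u i) x)"
  unfolding opoly_def by (simp add: Apow_sum sum_distrib_left mult_ac sum.swap[of _ I])

lemma Apow_eig: "Aop V E f = (\<lambda>x. \<theta> * f x) \<Longrightarrow> Apow V E n f x = \<theta> ^ n * f x"
proof (induction n arbitrary: x)
  case 0 then show ?case by simp
next
  case (Suc n)
  have e: "Apow V E n f = (\<lambda>x. \<theta>^n * f x)" by (rule ext) (rule Suc.IH[OF Suc(2)])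
  have "Apow V E (Suc n) f = Aop V E (\<lambda>x. \<theta>^n * f x)"
    by (simp add: Apow_Suc e)
  then show ?case using Suc(2) by (simp add: Aop_scale)
qed

lemma opoly_eig: "Aop V E f = (\<lambda>x. \<theta> * f x) \<Longrightarrow> opoly V E p f x = poly p \<theta> * f x"
  unfolding opoly_def poly_altdef by (simp add: Apow_eig sum_distrib_right sum_distrib_left mult_ac)

definition supp :: "'a set \<Rightarrow> ('a \<Rightarrow> 'b::zero) \<Rightarrow> bool" where
  "supp V v \<longleftrightarrow> (\<forall>x. x \<notin> V \<longrightarrow> v x = 0)"

lemma supp_Aop: "supp V (Aop V E v)" by (simp add: supp_def Aop_def)
lemma supp_Apow: "supp V v \<Longrightarrow> supp V (Apow V E n v)"
  by (cases n) (auto simp: Apow_Suc supp_Aop)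
lemma supp_opoly: "supp V v \<Longrightarrow> supp V (opoly V E p v)"
  using supp_Apow[of V v E] unfolding supp_def opoly_def by simp


lemma Aop_alt: "finite V \<Longrightarrow> x \<in> V \<Longrightarrow> Aop V E w x = (\<Sum>y\<in>V. if E x y then w y else 0)"
  unfolding Aop_def by (simp add: sum.inter_filter)

lemma Aop_sym:
  assumes sg: "simple_graph V E"
  shows "(\<Sum>x\<in>V. u x * Aop V E w x) = (\<Sum>x\<in>V. Aop V E u x * w x)"
proof -
  have fin: "finite V" and sym: "\<And>x y. E x y \<Longrightarrow> E y x" using sg by (auto simp: simple_graph_def)
  have "(\<Sum>x\<in>V. u x * Aop V E w x) = (\<Sum>x\<in>V. \<Sum>y\<in>V. if E x y then u x * w y else 0)"
    by (intro sum.cong refl) (simp add: Aop_alt[OF fin] sum_distrib_left if_distrib cong: if_cong)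
  also have "\<dots> = (\<Sum>y\<in>V. \<Sum>x\<in>V. if E x y then u x * w y else 0)" by (rule sum.swap)
  also have "\<dots> = (\<Sum>x\<in>V. Aop V E u x * w x)"
    by (intro sum.cong refl) (auto simp: Aop_alt[OF fin] sum_distrib_right intro!: sum.cong dest: sym)
  finally show ?thesis .
qed

lemma Aop_sym_cong:
  assumes sg: "simple_graph V E"
  shows "(\<Sum>x\<in>V. u x * Aop V E w x) = (\<Sum>x\<in>V. Aop V E u x * w x)"
  using Aop_sym[OF sg] .

lemma sym_eq: "simple_graph V E \<Longrightarrow> E x y = E y x" by (auto simp: simple_graph_def)

lemma Apow_sym:
  assumes sg: "simple_graph V E"
  shows "(\<Sum>x\<in>V. u x * Apow V E n w x) = (\<Sum>x\<in>V. Apow V E n u x * w x)"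
proof (induction n arbitrary: w)
  case 0 then show ?case by simp
next
  case (Suc n)
  have "(\<Sum>x\<in>V. u x * Apow V E (Suc n) w x) = (\<Sum>x\<in>V. Apow V E n u x * Aop V E w x)"
    using Suc[of "Aop V E w"] by (simp add: Apow_def funpow_Suc_right del: funpow.simps)
  also have "\<dots> = (\<Sum>x\<in>V. Aop V E (Apow V E n u) x * w x)" by (rule Aop_sym[OF sg])
  finally show ?case by (simp add: Apow_Suc)
qed

lemma opoly_sym:
  assumes sg: "simple_graph V E"
  shows "(\<Sum>x\<in>V. u x * opoly V E p w x) = (\<Sum>x\<in>V. opoly V E p u x * w x)"
proof -
  have "(\<Sum>x\<in>V. u x * opoly V E p w x) = (\<Sum>i\<le>degree p. coeff p i * (\<Sum>x\<in>V. u x * Apow V E i w x))"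
    unfolding opoly_def by (simp add: sum_distrib_left sum.swap[of _ V] mult_ac)
  also have "\<dots> = (\<Sum>i\<le>degree p. coeff p i * (\<Sum>x\<in>V. Apow V E i u x * w x))"
    by (simp add: Apow_sym[OF sg])
  also have "\<dots> = (\<Sum>x\<in>V. opoly V E p u x * w x)"
    unfolding opoly_def by (simp add: sum_distrib_left sum_distrib_right sum.swap[of _ V] mult_ac)
  finally show ?thesis .
qed

lemma dep:
  fixes u :: "'i \<Rightarrow> 'a \<Rightarrow> 'b::field"
  assumes "finite V" "finite I" "\<forall>i\<in>I. supp V (u i)" "card V < card I"
  shows "\<exists>c. (\<exists>i\<in>I. c i \<noteq> 0) \<and> (\<forall>x. (\<Sum>i\<in>I. c i * u i x) = 0)"
  using assms
proof (induction V arbitrary: I u rule: finite_induct)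
  case empty
  then obtain i0 where "i0 \<in> I" by fastforce
  moreover have "\<forall>x. (\<Sum>i\<in>I. 1 * u i x) = 0" using empty by (simp add: supp_def)
  ultimately show ?case by (intro exI[of _ "\<lambda>_. 1"]) auto
next
  case (insert a F)
  show ?case
  proof (cases "\<forall>i\<in>I. u i a = 0")
    case True
    have "\<forall>i\<in>I. supp F (u i)" using True insert.prems(2) unfolding supp_def by (metis insert_iff)
    moreover have "card F < card I" using insert by simp
    ultimately show ?thesis using insert.IH[OF insert.prems(1)] by blast
  next
    case False
    then obtain j where j: "j \<in> I" "u j a \<noteq> 0" by blast
    define I' where "I' = I - {j}"
    define u' where "u' = (\<lambda>i x. u i x - (u i a / u j a) * u j x)"
    have fI': "finite I'" using insert.prems(1) by (simp add: I'_def)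
    have sI': "\<forall>i\<in>I'. supp F (u' i)"
    proof (intro ballI)
      fix i assume i: "i \<in> I'"
      show "supp F (u' i)" unfolding supp_def
      proof (intro allI impI)
        fix x assume x: "x \<notin> F"
        show "u' i x = 0"
        proof (cases "x = a")
          case True then show ?thesis using j by (simp add: u'_def)
        next
          case False
          then have "u i x = 0" "u j x = 0" using insert.prems(2) i j x by (auto simp: supp_def I'_def)
          then show ?thesis by (simp add: u'_def)
        qed
      qed
    qed
    have cI': "card F < card I'" using insert j by (simp add: I'_def)
    obtain c' where c': "\<exists>i\<in>I'. c' i \<noteq> 0" "\<forall>x. (\<Sum>i\<in>I'. c' i * u' i x) = 0"
      using insert.IH[OF fI' sI' cI'] by blast
    define c where "c = c'(j := - (\<Sum>i\<in>I'. c' i * u i a) / u j a)"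
    have "\<forall>x. (\<Sum>i\<in>I. c i * u i x) = 0"
    proof
      fix x
      have "(\<Sum>i\<in>I. c i * u i x) = c j * u j x + (\<Sum>i\<in>I'. c' i * u i x)"
        using insert.prems(1) j unfolding I'_def c_def
        by (simp add: sum.remove[of I j])
      also have "(\<Sum>i\<in>I'. c' i * u i x) = (\<Sum>i\<in>I'. c' i * u' i x) + (\<Sum>i\<in>I'. c' i * u i a) / u j a * u j x"
        unfolding u'_def by (simp add: algebra_simps sum.distrib sum_distrib_left sum_distrib_right sum_divide_distrib sum_subtractf)
      finally show "(\<Sum>i\<in>I. c i * u i x) = 0" using c'(2) by (simp add: c_def)
    qed
    moreover have "\<exists>i\<in>I. c i \<noteq> 0" using c'(1) by (auto simp: c_def I'_def)
    ultimately show ?thesis by blast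
  qed
qed


lemma SEQ:
  fixes n :: nat
  shows "u \<noteq> (\<lambda>x. 0) \<Longrightarrow> opoly V E (\<Prod>i<n. [:-r i, 1:]) u = (\<lambda>x. 0) \<Longrightarrow>
   \<exists>s a. opoly V E s u \<noteq> (\<lambda>x. 0) \<and> Aop V E (opoly V E s u) = (\<lambda>x. a * opoly V E s u x)"
proof (induction n arbitrary: u)
  case 0 then show ?case by simp
next
  case (Suc n)
  define w where "w = opoly V E [:-r n, 1:] u"
  have e: "opoly V E (\<Prod>i<n. [:-r i, 1:]) w = (\<lambda>x. 0)"
    using Suc.prems(2) unfolding w_def prod.lessThan_Suc opoly_mult .
  show ?case
  proof (cases "w = (\<lambda>x. 0)")
    case True
    then have "Aop V E u = (\<lambda>x. r n * u x)"
      unfolding w_def by (intro ext) (metis opoly_lin eq_iff_diff_eq_0)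
    then show ?thesis using Suc.prems(1) by (intro exI[of _ 1] exI[of _ "r n"]) simp
  next
    case False
    from Suc.IH[OF False e] obtain s a where
      "opoly V E s w \<noteq> (\<lambda>x. 0)" "Aop V E (opoly V E s w) = (\<lambda>x. a * opoly V E s w x)" by blast
    then show ?thesis unfolding w_def opoly_mult[symmetric] by blast
  qed
qed

lemma Aop_cnj: "Aop V E (\<lambda>x. cnj (z x)) x = cnj (Aop V E z x)"
  unfolding Aop_def by simp

lemma cnj_sum_sq:
  assumes "finite V" "x0 \<in> V" "z x0 \<noteq> 0"
  shows "(\<Sum>x\<in>V. cnj (z x) * z x) \<noteq> 0"
proof -
  have cw: "\<And>w. cnj w * w = complex_of_real ((cmod w)^2)" by (metis complex_norm_square mult.commute)
  have "(\<Sum>x\<in>V. cnj (z x) * z x) = complex_of_real (\<Sum>x\<in>V. (cmod (z x))^2)"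
    unfolding of_real_sum by (intro sum.cong refl) (rule cw)
  moreover have "(\<Sum>x\<in>V. (cmod (z x))^2) > 0"
  proof -
    have "(cmod (z x0))^2 \<le> (\<Sum>x\<in>V. (cmod (z x))^2)"
      by (rule member_le_sum) (use assms in auto)
    moreover have "(cmod (z x0))^2 > 0" using assms by simp
    ultimately show ?thesis by linarith
  qed
  ultimately show ?thesis by (metis of_real_eq_0_iff less_irrefl)
qed

lemma eig_real:
  assumes sg: "simple_graph V E" and sz: "supp V z" and nz: "z \<noteq> (\<lambda>x. 0)"
    and ev: "Aop V E z = (\<lambda>x. a * z x)"
  shows "a = complex_of_real (Re a)" "adj_eigenvalue V E (Re a)"
proof -
  have fin: "finite V" using sg by (simp add: simple_graph_def)
  obtain x0 where x0: "x0 \<in> V" "z x0 \<noteq> 0" using sz nz unfolding supp_def by fastforce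
  define S where "S = (\<Sum>x\<in>V. cnj (z x) * z x)"
  have S0: "S \<noteq> 0" unfolding S_def by (rule cnj_sum_sq[of V x0 z, OF fin x0])
  have "(\<Sum>x\<in>V. cnj (z x) * Aop V E z x) = (\<Sum>x\<in>V. Aop V E (\<lambda>x. cnj (z x)) x * z x)"
    by (rule Aop_sym[OF sg])
  then have "(\<Sum>x\<in>V. cnj (z x) * (a * z x)) = (\<Sum>x\<in>V. cnj (a * z x) * z x)"
    by (simp add: Aop_cnj ev)
  then have "a * S = cnj a * S" unfolding S_def by (simp add: sum_distrib_left mult_ac)
  then have "a = cnj a" using S0 by simp
  then have "Im a = Im (cnj a)" by (rule arg_cong)
  then have ima: "Im a = 0" by simp
  then show aR: "a = complex_of_real (Re a)" by (simp add: complex_eq_iff)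
  have key: "\<And>x. x \<in> V \<Longrightarrow> (\<Sum>y\<in>V. (if E x y then 1 else 0) * z y) = a * z x"
  proof -
    fix x assume x: "x \<in> V"
    have "(\<Sum>y\<in>V. (if E x y then 1 else 0) * z y) = Aop V E z x"
      unfolding Aop_alt[OF fin x] by (intro sum.cong refl) simp
    then show "(\<Sum>y\<in>V. (if E x y then 1 else 0) * z y) = a * z x" using ev by metis
  qed
  show "adj_eigenvalue V E (Re a)"
  proof (cases "Re (z x0) = 0")
    case False
    show ?thesis unfolding adj_eigenvalue_def
    proof (intro exI[of _ "\<lambda>x. Re (z x)"] conjI ballI)
      show "\<exists>x\<in>V. Re (z x) \<noteq> 0" using False x0 by blast
      fix x assume x: "x \<in> V"
      have "Re (\<Sum>y\<in>V. (if E x y then 1 else 0) * z y) = Re (a * z x)" using key[OF x] by simp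
      moreover have "(\<Sum>y\<in>V. (if E x y then 1 else 0) * Re (z y)) = Re (\<Sum>y\<in>V. (if E x y then 1 else 0) * z y)"
        unfolding Re_sum by (intro sum.cong refl) simp
      ultimately show "(\<Sum>y\<in>V. (if E x y then 1 else 0) * Re (z y)) = Re a * Re (z x)"
        using ima by simp
    qed
  next
    case True
    then have "Im (z x0) \<noteq> 0" using x0 complex_eq_iff by force
    show ?thesis unfolding adj_eigenvalue_def
    proof (intro exI[of _ "\<lambda>x. Im (z x)"] conjI ballI)
      show "\<exists>x\<in>V. Im (z x) \<noteq> 0" using \<open>Im (z x0) \<noteq> 0\<close> x0 by blast
      fix x assume x: "x \<in> V"
      have "Im (\<Sum>y\<in>V. (if E x y then 1 else 0) * z y) = Im (a * z x)" using key[OF x] by simp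
      moreover have "(\<Sum>y\<in>V. (if E x y then 1 else 0) * Im (z y)) = Im (\<Sum>y\<in>V. (if E x y then 1 else 0) * z y)"
        unfolding Im_sum by (intro sum.cong refl) simp
      ultimately show "(\<Sum>y\<in>V. (if E x y then 1 else 0) * Im (z y)) = Re a * Im (z x)"
        using ima by simp
    qed
  qed
qed


lemma ANN:
  fixes \<theta> :: "'j \<Rightarrow> real" and v :: "'a \<Rightarrow> complex"
  assumes sg: "simple_graph V E" and fJ: "finite J"
    and H: "\<And>a z. supp V z \<Longrightarrow> z \<noteq> (\<lambda>x. 0) \<Longrightarrow> Aop V E z = (\<lambda>x. a * z x) \<Longrightarrow>
            \<exists>j\<in>J. a = complex_of_real (\<theta> j)"
    and sv: "supp V v"
  shows "opoly V E (\<Prod>j\<in>J. [:- complex_of_real (\<theta> j), 1:]) v = (\<lambda>x. 0)"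
proof (rule ccontr)
  define m where "m = (\<Prod>j\<in>J. [:- complex_of_real (\<theta> j), 1:])"
  define u where "u = opoly V E m v"
  assume "opoly V E (\<Prod>j\<in>J. [:- complex_of_real (\<theta> j), 1:]) v \<noteq> (\<lambda>x. 0)"
  then have unz: "u \<noteq> (\<lambda>x. 0)" unfolding u_def m_def .
  have su: "supp V u" unfolding u_def by (rule supp_opoly[OF sv])
  have fin: "finite V" using sg by (simp add: simple_graph_def)
  define n where "n = card V"
  have "\<exists>c. (\<exists>i\<in>{..n}. c i \<noteq> 0) \<and> (\<forall>x. (\<Sum>i\<in>{..n}. c i * Apow V E i u x) = 0)"
    by (rule dep[OF fin]) (auto simp: n_def supp_Apow[OF su])
  then obtain c where c: "\<exists>i\<in>{..n}. c i \<noteq> 0" "\<forall>x. (\<Sum>i\<in>{..n}. c i * Apow V E i u x) = 0"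
    by blast
  define p where "p = Poly (map c [0..<Suc n])"
  have cp: "coeff p i = (if i < Suc n then c i else 0)" for i
    unfolding p_def nth_default_def coeff_Poly_eq by (simp del: upt_Suc)
  have dp: "degree p < Suc n"
    by (rule le_imp_less_Suc, rule degree_le) (simp add: cp)
  have pnz: "p \<noteq> 0" using c(1) cp by (metis atMost_iff coeff_0 le_imp_less_Suc)
  have pu: "opoly V E p u = (\<lambda>x. 0)"
  proof
    fix x
    have "opoly V E p u x = (\<Sum>i<Suc n. coeff p i * Apow V E i u x)" by (rule opoly_bound[OF dp])
    also have "\<dots> = (\<Sum>i\<in>{..n}. c i * Apow V E i u x)"
      unfolding lessThan_Suc_atMost by (intro sum.cong refl) (simp add: cp)
    finally show "opoly V E p u x = 0" using c(2) by simp
  qed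
  obtain root where root: "smult (lead_coeff p) (\<Prod>i<degree p. [:-root i, 1:]) = p"
    using complex_poly_decompose' by blast
  have lc: "lead_coeff p \<noteq> 0" using pnz by simp
  have "opoly V E (\<Prod>i<degree p. [:-root i, 1:]) u = (\<lambda>x. 0)"
  proof
    fix x
    have "lead_coeff p * opoly V E (\<Prod>i<degree p. [:-root i, 1:]) u x = opoly V E p u x"
      by (metis opoly_smult root)
    then show "opoly V E (\<Prod>i<degree p. [:-root i, 1:]) u x = 0" using pu lc by simp
  qed
  from SEQ[OF unz this] obtain s a where sa:
    "opoly V E s u \<noteq> (\<lambda>x. 0)" "Aop V E (opoly V E s u) = (\<lambda>x. a * opoly V E s u x)" by blast
  define z where "z = opoly V E s u"
  have sz: "supp V z" unfolding z_def by (rule supp_opoly[OF su])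
  obtain j where j: "j \<in> J" "a = complex_of_real (\<theta> j)" using H[OF sz] sa unfolding z_def by blast
  define R where "R = (\<Prod>i\<in>J - {j}. [:- complex_of_real (\<theta> i), 1:])"
  have mR: "m = [:- complex_of_real (\<theta> j), 1:] * R" unfolding m_def R_def
    by (rule prod.remove[OF fJ j(1)])
  define y where "y = opoly V E R (opoly V E s v)"
  have zy: "z x = Aop V E y x - complex_of_real (\<theta> j) * y x" for x
  proof -
    have "z = opoly V E m (opoly V E s v)" unfolding z_def u_def by (rule opoly_comm)
    also have "\<dots> = opoly V E [:- complex_of_real (\<theta> j), 1:] y" unfolding mR y_def opoly_mult ..
    finally show ?thesis by (simp add: opoly_lin)
  qed
  have Az: "Aop V E z = (\<lambda>x. complex_of_real (\<theta> j) * z x)" using sa(2) j(2) unfolding z_def by simp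
  have "(\<Sum>x\<in>V. cnj (z x) * Aop V E y x) = (\<Sum>x\<in>V. Aop V E (\<lambda>x. cnj (z x)) x * y x)"
    by (rule Aop_sym[OF sg])
  also have "\<dots> = (\<Sum>x\<in>V. complex_of_real (\<theta> j) * (cnj (z x) * y x))"
    by (simp add: Aop_cnj Az mult_ac)
  finally have e1: "(\<Sum>x\<in>V. cnj (z x) * Aop V E y x) = complex_of_real (\<theta> j) * (\<Sum>x\<in>V. cnj (z x) * y x)"
    by (simp add: sum_distrib_left)
  have "(\<Sum>x\<in>V. cnj (z x) * z x) = (\<Sum>x\<in>V. cnj (z x) * Aop V E y x) - complex_of_real (\<theta> j) * (\<Sum>x\<in>V. cnj (z x) * y x)"
    by (simp add: zy right_diff_distrib sum_subtractf sum_distrib_left mult_ac)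
  then have S0: "(\<Sum>x\<in>V. cnj (z x) * z x) = 0" using e1 by simp
  have "z = (\<lambda>x. 0)"
  proof (rule ccontr)
    assume "z \<noteq> (\<lambda>x. 0)"
    then obtain x0 where "z x0 \<noteq> 0" by auto
    moreover then have "x0 \<in> V" using sz unfolding supp_def by auto
    ultimately show False using cnj_sum_sq[of V x0 z, OF fin] S0 by blast
  qed
  then show False using sa(1) unfolding z_def by blast
qed


lemma Aop_of_real: "Aop V E (\<lambda>x. complex_of_real (u x)) x = complex_of_real (Aop V E u x)"
  unfolding Aop_def by simp

lemma opoly_transfer:
  assumes "finite J"
  shows "opoly V E (\<Prod>j\<in>J. [:- complex_of_real (\<theta> j), 1:]) (\<lambda>x. complex_of_real (v x))
       = (\<lambda>x. complex_of_real (opoly V E (\<Prod>j\<in>J. [:- \<theta> j, 1:]) v x))"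
  using assms
proof (induction J rule: finite_induct)
  case empty then show ?case by simp
next
  case (insert j J)
  have e: "\<And>(th::_ \<Rightarrow> 'c::comm_ring_1) w. opoly V E (\<Prod>j\<in>insert j J. [:- th j, 1:]) w = opoly V E [:- th j, 1:] (opoly V E (\<Prod>j\<in>J. [:- th j, 1:]) w)"
    by (simp only: prod.insert[OF insert.hyps] opoly_mult)
  show ?case
    unfolding e by (rule ext) (simp only: opoly_lin insert.IH Aop_of_real of_real_diff of_real_mult)
qed

lemma ANN_real:
  fixes \<theta> :: "'j \<Rightarrow> real" and v :: "'a \<Rightarrow> real"
  assumes sg: "simple_graph V E" and fJ: "finite J"
    and H: "\<And>t. adj_eigenvalue V E t \<Longrightarrow> \<exists>j\<in>J. t = \<theta> j"
    and sv: "supp V v"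
  shows "opoly V E (\<Prod>j\<in>J. [:- \<theta> j, 1:]) v = (\<lambda>x. 0)"
proof -
  have H': "\<exists>j\<in>J. a = complex_of_real (\<theta> j)"
    if "supp V z" "z \<noteq> (\<lambda>x. 0)" "Aop V E z = (\<lambda>x. a * z x)" for a z
  proof -
    from eig_real[OF sg that] obtain j where "j \<in> J" "Re a = \<theta> j" using H by blast
    then show ?thesis using eig_real(1)[OF sg that] by metis
  qed
  have sv': "supp V (\<lambda>x. complex_of_real (v x))" using sv by (simp add: supp_def)
  have A: "opoly V E (\<Prod>j\<in>J. [:- complex_of_real (\<theta> j), 1:]) (\<lambda>x. complex_of_real (v x)) = (\<lambda>x. 0)"
    by (rule ANN[OF sg fJ H' sv'])
  have B: "(\<lambda>x. complex_of_real (opoly V E (\<Prod>j\<in>J. [:- \<theta> j, 1:]) v x)) = (\<lambda>x. 0)"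
    using A unfolding opoly_transfer[OF fJ] .
  show ?thesis
  proof
    fix x show "opoly V E (\<Prod>j\<in>J. [:- \<theta> j, 1:]) v x = 0" using fun_cong[OF B, of x] by simp
  qed
qed




lemma walkn_Suc_right: "walkn E (Suc n) x y \<longleftrightarrow> (\<exists>z. walkn E n x z \<and> E z y)"
  by (induction n arbitrary: x) auto

lemma walkn_sym:
  assumes "\<And>x y. E x y \<Longrightarrow> E y x"
  shows "walkn E n x y \<Longrightarrow> walkn E n y x"
proof (induction n arbitrary: x y)
  case 0 then show ?case by simp
next
  case (Suc n)
  then obtain z where "E x z" "walkn E n z y" by auto
  then have "walkn E n y z" using Suc.IH by blast
  then show ?case using \<open>E x z\<close> assms walkn_Suc_right by metis
qed

locale drgl =
  fixes V :: "'a set" and E :: "'a \<Rightarrow> 'a \<Rightarrow> bool" and b c :: "nat \<Rightarrow> nat" and D :: nat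
  assumes drg: "distance_regular V E b c D"
begin

abbreviation "d \<equiv> gdist E"

lemma sg: "simple_graph V E" using drg by (simp add: distance_regular_def)
lemma fin: "finite V" using sg by (simp add: simple_graph_def)
lemma Esym: "E x y \<Longrightarrow> E y x" using sg by (simp add: simple_graph_def)
lemma EV: "E x y \<Longrightarrow> x \<in> V \<and> y \<in> V" using sg by (simp add: simple_graph_def)
lemma Eirr: "\<not> E x x" using sg by (simp add: simple_graph_def)
lemma conn: "x \<in> V \<Longrightarrow> y \<in> V \<Longrightarrow> \<exists>n. walkn E n x y"
  using drg by (simp add: distance_regular_def connected_graph_def)

lemma walk_d: "x \<in> V \<Longrightarrow> y \<in> V \<Longrightarrow> walkn E (d x y) x y"
  unfolding gdist_def using conn by (metis LeastI)

lemma d_le: "walkn E n x y \<Longrightarrow> d x y \<le> n"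
  unfolding gdist_def by (rule Least_le)

lemma d_sym: "x \<in> V \<Longrightarrow> y \<in> V \<Longrightarrow> d x y = d y x"
  using walk_d d_le walkn_sym[of E, OF Esym] by (metis le_antisym)

lemma d_0: "x \<in> V \<Longrightarrow> y \<in> V \<Longrightarrow> d x y = 0 \<longleftrightarrow> x = y"
  using walk_d d_le by (metis walkn.simps(1) le_zero_eq)

lemma d_1: "x \<in> V \<Longrightarrow> y \<in> V \<Longrightarrow> d x y = 1 \<longleftrightarrow> E x y"
proof
  assume "x \<in> V" "y \<in> V" "d x y = 1"
  then show "E x y" using walk_d[of x y] by auto
next
  assume xy: "x \<in> V" "y \<in> V" "E x y"
  then have "d x y \<le> 1" using d_le[of 1 x y] by auto
  moreover have "x \<noteq> y" using xy Eirr by auto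
  ultimately show "d x y = 1" using d_0[OF xy(1,2)] by linarith
qed

lemma d_tri: assumes "E x z" "y \<in> V" shows "d z y \<le> d x y + 1" "d x y \<le> d z y + 1"
proof -
  have V: "x \<in> V" "z \<in> V" using EV assms by auto
  have "walkn E (Suc (d z y)) x y" using walk_d[OF V(2) assms(2)] assms(1) by auto
  then show "d x y \<le> d z y + 1" using d_le by fastforce
  have "walkn E (Suc (d x y)) z y" using walk_d[OF V(1) assms(2)] Esym[OF assms(1)] by auto
  then show "d z y \<le> d x y + 1" using d_le by fastforce
qed

lemma d_bound: "x \<in> V \<Longrightarrow> y \<in> V \<Longrightarrow> d x y \<le> D"
  using drg by (simp add: distance_regular_def)

lemma cnt_c: "x \<in> V \<Longrightarrow> y \<in> V \<Longrightarrow> d x y = i \<Longrightarrow> 1 \<le> i \<Longrightarrow> card {z\<in>V. E y z \<and> d x z + 1 = i} = c i"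
  using drg d_bound unfolding distance_regular_def by blast

lemma cnt_b: "x \<in> V \<Longrightarrow> y \<in> V \<Longrightarrow> d x y = i \<Longrightarrow> card {z\<in>V. E y z \<and> d x z = i + 1} = b i"
  using drg d_bound unfolding distance_regular_def by blast

definition cc :: "nat \<Rightarrow> nat" where "cc i = (if i = 0 then 0 else c i)"

definition F :: "(nat \<Rightarrow> real) \<Rightarrow> nat \<Rightarrow> real" where
  "F w i = real (cc i) * w (i - 1) + real (b i) * w (i + 1) + (real (b 0) - real (cc i) - real (b i)) * w i"

lemma deg: assumes "x \<in> V" shows "card {z\<in>V. E x z} = b 0"
proof -
  have "{z\<in>V. E x z} = {z\<in>V. E x z \<and> d x z = 0 + 1}" using d_1 assms by auto
  then show ?thesis using cnt_b[OF assms assms] d_0[OF assms assms] by simp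
qed

lemma NSUM:
  assumes x: "x \<in> V" and y: "y \<in> V"
  shows "(\<Sum>z\<in>{z\<in>V. E x z}. w (d z y)) = F w (d x y)"
    and "cc (d x y) + b (d x y) \<le> b 0"
proof -
  define i where "i = d x y"
  define N where "N = {z\<in>V. E x z}"
  define P where "P = {z\<in>N. d z y + 1 = i}"
  define Q where "Q = {z\<in>N. d z y = i}"
  define R where "R = {z\<in>N. d z y = i + 1}"
  have fN: "finite N" using fin by (simp add: N_def)
  have NPQR: "N = P \<union> Q \<union> R"
  proof -
    have "z \<in> P \<union> Q \<union> R" if "z \<in> N" for z
    proof -
      have "E x z" using that by (simp add: N_def)
      then have "d z y \<le> i + 1" "i \<le> d z y + 1" using d_tri[OF _ y] by (auto simp: i_def)
      then show ?thesis using that by (auto simp: P_def Q_def R_def)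
    qed
    then show ?thesis by (auto simp: P_def Q_def R_def)
  qed
  have cP: "card P = cc i"
  proof (cases "i = 0")
    case True then show ?thesis by (simp add: P_def cc_def)
  next
    case False
    have "P = {z\<in>V. E x z \<and> d y z + 1 = i}"
      using d_sym y EV by (auto simp: P_def N_def)
    then show ?thesis using cnt_c[OF y x] d_sym[OF x y] False by (simp add: i_def cc_def)
  qed
  have cR: "card R = b i"
  proof -
    have "R = {z\<in>V. E x z \<and> d y z = i + 1}"
      using d_sym y EV by (auto simp: R_def N_def)
    then show ?thesis using cnt_b[OF y x] d_sym[OF x y] by (simp add: i_def)
  qed
  have fP: "finite P" "finite Q" "finite R" using fN by (auto simp: P_def Q_def R_def)
  have disj: "P \<inter> Q = {}" "(P \<union> Q) \<inter> R = {}" by (auto simp: P_def Q_def R_def)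
  have cN: "card N = card P + card Q + card R"
    unfolding NPQR using fP disj by (simp add: card_Un_disjoint)
  have cN0: "card N = b 0" using deg[OF x] by (simp add: N_def)
  show "cc (d x y) + b (d x y) \<le> b 0" using cN cN0 cP cR by (simp add: i_def)
  have "(\<Sum>z\<in>N. w (d z y)) = (\<Sum>z\<in>P. w (d z y)) + (\<Sum>z\<in>Q. w (d z y)) + (\<Sum>z\<in>R. w (d z y))"
    unfolding NPQR using fP disj by (simp add: sum.union_disjoint)
  also have "(\<Sum>z\<in>P. w (d z y)) = real (card P) * w (i - 1)"
    by (subst sum.cong[OF refl, of _ _ "\<lambda>_. w (i - 1)"]) (auto simp: P_def)
  also have "(\<Sum>z\<in>Q. w (d z y)) = real (card Q) * w i"
    by (subst sum.cong[OF refl, of _ _ "\<lambda>_. w i"]) (auto simp: Q_def)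
  also have "(\<Sum>z\<in>R. w (d z y)) = real (card R) * w (i + 1)"
    by (subst sum.cong[OF refl, of _ _ "\<lambda>_. w (i + 1)"]) (auto simp: R_def)
  finally have S: "(\<Sum>z\<in>N. w (d z y)) = real (card P) * w (i - 1) + real (card Q) * w i + real (card R) * w (i + 1)" .
  have cQ: "real (b 0) - real (card P) - real (card R) = real (card Q)" using cN cN0 by linarith
  have "F w (d x y) = real (card P) * w (i - 1) + real (card R) * w (i + 1) + real (card Q) * w i"
    unfolding F_def i_def[symmetric] cP[symmetric] cR[symmetric] cQ ..
  then show "(\<Sum>z\<in>{z\<in>V. E x z}. w (d z y)) = F w (d x y)"
    using S unfolding N_def by linarith
qed

end




context drgl
begin

definition dl :: "'a \<Rightarrow> 'a \<Rightarrow> real" where "dl y z = (if z = y then 1 else 0)"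

lemma supp_dl: "y \<in> V \<Longrightarrow> supp V (dl y)" by (auto simp: supp_def dl_def)

lemma decomp: "supp V g \<Longrightarrow> (\<lambda>z. \<Sum>y\<in>V. g y * dl y z) = g"
proof
  fix z assume "supp V g"
  then show "(\<Sum>y\<in>V. g y * dl y z) = g z"
  proof (cases "z \<in> V")
    case True
    have "(\<Sum>y\<in>V. g y * dl y z) = (\<Sum>y\<in>V. if y = z then g z else 0)"
      by (intro sum.cong refl) (simp add: dl_def)
    then show ?thesis using True fin by simp
  next
    case False
    have "(\<Sum>y\<in>V. g y * dl y z) = 0"
      by (intro sum.neutral) (use False in \<open>auto simp: dl_def\<close>)
    then show ?thesis using False \<open>supp V g\<close> by (simp add: supp_def)
  qed
qed

lemma Aop_N: "x \<in> V \<Longrightarrow> Aop V E u x = (\<Sum>z\<in>{z\<in>V. E x z}. u z)"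
  by (simp add: Aop_def)

lemma Apow_dist: "\<exists>w. \<forall>x\<in>V. \<forall>y\<in>V. Apow V E n (dl y) x = w (d x y)"
proof (induction n)
  case 0
  show ?case by (intro exI[of _ "\<lambda>i. if i = 0 then 1 else 0"]) (auto simp: dl_def d_0)
next
  case (Suc n)
  then obtain w where w: "\<forall>x\<in>V. \<forall>y\<in>V. Apow V E n (dl y) x = w (d x y)" by blast
  have "Apow V E (Suc n) (dl y) x = F w (d x y)" if "x \<in> V" "y \<in> V" for x y
  proof -
    have "Apow V E (Suc n) (dl y) x = (\<Sum>z\<in>{z\<in>V. E x z}. Apow V E n (dl y) z)"
      by (simp add: Apow_Suc Aop_N that)
    also have "\<dots> = (\<Sum>z\<in>{z\<in>V. E x z}. w (d z y))"
      by (intro sum.cong refl) (use w that in auto)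
    also have "\<dots> = F w (d x y)" by (rule NSUM(1)[OF that])
    finally show ?thesis .
  qed
  then show ?case by blast
qed

lemma opoly_dist: "\<exists>\<mu>. \<forall>x\<in>V. \<forall>y\<in>V. opoly V E p (dl y) x = \<mu> (d x y)"
proof -
  obtain W where W: "\<forall>n. \<forall>x\<in>V. \<forall>y\<in>V. Apow V E n (dl y) x = W n (d x y)"
    using Apow_dist by metis
  show ?thesis
    by (intro exI[of _ "\<lambda>i. \<Sum>k\<le>degree p. coeff p k * W k i"]) (simp add: opoly_def W)
qed

lemma spectral:
  assumes f: "supp V f" "x0 \<in> V" "f x0 \<noteq> 0" "Aop V E f = (\<lambda>x. \<theta> * f x)"
    and r: "poly r \<theta> \<noteq> 0"
    and ann: "\<And>v. supp V v \<Longrightarrow> opoly V E ([:-\<theta>, 1:] * r) v = (\<lambda>x. 0)"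
  shows "\<exists>\<mu>. \<mu> 0 > 0 \<and> (\<forall>x\<in>V. \<forall>y\<in>V. \<theta> * \<mu> (d x y) = F \<mu> (d x y))
            \<and> (\<forall>g. supp V g \<longrightarrow> 0 \<le> (\<Sum>x\<in>V. \<Sum>y\<in>V. g x * g y * \<mu> (d x y)))"
proof -
  define q where "q = r * r"
  obtain \<mu> where \<mu>: "\<forall>x\<in>V. \<forall>y\<in>V. opoly V E q (dl y) x = \<mu> (d x y)"
    using opoly_dist by blast
  have quad: "(\<Sum>x\<in>V. \<Sum>y\<in>V. g x * g y * \<mu> (d x y)) = (\<Sum>x\<in>V. opoly V E r g x * opoly V E r g x)"
    if g: "supp V g" for g
  proof -
    have "(\<Sum>x\<in>V. \<Sum>y\<in>V. g x * g y * \<mu> (d x y)) = (\<Sum>x\<in>V. g x * opoly V E q g x)"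
    proof (intro sum.cong refl)
      fix x assume x: "x \<in> V"
      have "(\<Sum>y\<in>V. g x * g y * \<mu> (d x y)) = g x * (\<Sum>y\<in>V. g y * opoly V E q (dl y) x)"
        unfolding sum_distrib_left by (intro sum.cong refl) (use \<mu> x in \<open>simp add: mult_ac\<close>)
      also have "(\<Sum>y\<in>V. g y * opoly V E q (dl y) x) = opoly V E q (\<lambda>z. \<Sum>y\<in>V. g y * dl y z) x"
        by (rule opoly_sum[symmetric])
      also have "\<dots> = opoly V E q g x" using decomp[OF g] by simp
      finally show "(\<Sum>y\<in>V. g x * g y * \<mu> (d x y)) = g x * opoly V E q g x" .
    qed
    also have "\<dots> = (\<Sum>x\<in>V. g x * opoly V E r (opoly V E r g) x)" by (simp add: q_def opoly_mult)
    also have "\<dots> = (\<Sum>x\<in>V. opoly V E r g x * opoly V E r g x)" by (rule opoly_sym[OF sg])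
    finally show ?thesis .
  qed
  have psd: "\<forall>g. supp V g \<longrightarrow> 0 \<le> (\<Sum>x\<in>V. \<Sum>y\<in>V. g x * g y * \<mu> (d x y))"
  proof (intro allI impI)
    fix g :: "'a \<Rightarrow> real" assume g: "supp V g"
    show "0 \<le> (\<Sum>x\<in>V. \<Sum>y\<in>V. g x * g y * \<mu> (d x y))"
      unfolding quad[OF g] by (intro sum_nonneg) simp
  qed
  have dd: "(\<Sum>x'\<in>V. \<Sum>y\<in>V. dl x x' * dl x y * \<mu> (d x' y)) = \<mu> 0" if x: "x \<in> V" for x
  proof -
    have "(\<Sum>x'\<in>V. \<Sum>y\<in>V. dl x x' * dl x y * \<mu> (d x' y)) = (\<Sum>x'\<in>V. dl x x' * \<mu> (d x' x))"
    proof (intro sum.cong refl)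
      fix x' assume "x' \<in> V"
      have "(\<Sum>y\<in>V. dl x x' * dl x y * \<mu> (d x' y)) = (\<Sum>y\<in>V. if y = x then dl x x' * \<mu> (d x' x) else 0)"
        by (intro sum.cong refl) (simp add: dl_def)
      also have "\<dots> = dl x x' * \<mu> (d x' x)" using fin x by simp
      finally show "(\<Sum>y\<in>V. dl x x' * dl x y * \<mu> (d x' y)) = dl x x' * \<mu> (d x' x)" .
    qed
    also have "\<dots> = (\<Sum>x'\<in>V. if x' = x then \<mu> (d x' x) else 0)"
      by (intro sum.cong refl) (simp add: dl_def)
    also have "\<dots> = \<mu> (d x x)" using fin x by simp
    finally show ?thesis using d_0[OF x x] by simp
  qed
  have mu0: "\<mu> 0 > 0"
  proof (rule ccontr)
    assume "\<not> \<mu> 0 > 0"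
    moreover have "0 \<le> (\<Sum>x'\<in>V. \<Sum>y\<in>V. dl x0 x' * dl x0 y * \<mu> (d x' y))"
      using psd supp_dl[OF f(2)] by blast
    then have "\<mu> 0 \<ge> 0" unfolding dd[OF f(2)] .
    ultimately have m0: "\<mu> 0 = 0" by simp
    have z: "opoly V E r (dl x) z = 0" if "x \<in> V" "z \<in> V" for x z
    proof -
      have "(\<Sum>z\<in>V. opoly V E r (dl x) z * opoly V E r (dl x) z) = 0"
        using quad[OF supp_dl[OF that(1)]] dd[OF that(1)] m0 by simp
      then have "\<forall>z\<in>V. opoly V E r (dl x) z * opoly V E r (dl x) z = 0"
        using sum_nonneg_eq_0_iff[OF fin, of "\<lambda>z. opoly V E r (dl x) z * opoly V E r (dl x) z"] by simp
      then show ?thesis using that(2) by simp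
    qed
    have "opoly V E r f x0 = opoly V E r (\<lambda>z. \<Sum>y\<in>V. f y * dl y z) x0" using decomp[OF f(1)] by simp
    also have "\<dots> = (\<Sum>y\<in>V. f y * opoly V E r (dl y) x0)" by (rule opoly_sum)
    also have "\<dots> = 0" using z f(2) by simp
    finally have "opoly V E r f x0 = 0" .
    moreover have "opoly V E r f x0 = poly r \<theta> * f x0" by (rule opoly_eig[OF f(4)])
    ultimately show False using r f(3) by simp
  qed
  have eig: "\<theta> * \<mu> (d x y) = F \<mu> (d x y)" if x: "x \<in> V" and y: "y \<in> V" for x y
  proof -
    have "opoly V E ([:-\<theta>, 1:] * r) (opoly V E r (dl y)) = (\<lambda>x. 0)"
      by (rule ann) (rule supp_opoly[OF supp_dl[OF y]])
    then have z0: "opoly V E [:-\<theta>, 1:] (opoly V E q (dl y)) = (\<lambda>x. 0)"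
      unfolding q_def opoly_mult .
    have "Aop V E (opoly V E q (dl y)) x - \<theta> * opoly V E q (dl y) x = 0"
      using fun_cong[OF z0, of x] opoly_lin[of V E \<theta> "opoly V E q (dl y)" x] by simp
    moreover have "Aop V E (opoly V E q (dl y)) x = F \<mu> (d x y)"
    proof -
      have "Aop V E (opoly V E q (dl y)) x = (\<Sum>z\<in>{z\<in>V. E x z}. \<mu> (d z y))"
        unfolding Aop_N[OF x] by (intro sum.cong refl) (use \<mu> y in auto)
      then show ?thesis using NSUM(1)[OF x y] by simp
    qed
    ultimately show ?thesis using \<mu> x y by simp
  qed
  show ?thesis using mu0 psd eig by blast
qed

end




lemma alg_id: fixes \<theta> k b1 t m0 m1 m2 :: real
 assumes "\<theta> * m0 = k * m1" "\<theta> * m1 = m0 + b1 * m2 + (k - 1 - b1) * m1"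
 shows "(\<theta> - k) * (t*\<theta> - b1 + t) * m0 = k * b1 * (m0 - m2 - (t+1)*(m1-m2))"
  using assms by algebra

lemma alg: fixes \<theta> k b1 t m0 m1 m2 :: real
 assumes "\<theta> * m0 = k * m1" "\<theta> * m1 = m0 + b1 * m2 + (k - 1 - b1) * m1"
   and K: "0 \<le> m0 - m2 - (t+1)*(m1 - m2)" and m0: "m0 > 0" and tk: "\<theta> < k" and "k > 0" and "b1 \<ge> 0"
 shows "t * \<theta> \<le> b1 - t"
proof (rule ccontr)
  assume "\<not> t * \<theta> \<le> b1 - t"
  then have "t*\<theta> - b1 + t > 0" by simp
  moreover have "\<theta> - k < 0" using tk by simp
  ultimately have "(\<theta> - k) * (t*\<theta> - b1 + t) < 0" by (simp add: mult_neg_pos)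
  then have "(\<theta> - k) * (t*\<theta> - b1 + t) * m0 < 0" using m0 by (simp add: mult_neg_pos)
  moreover have "k * b1 * (m0 - m2 - (t+1)*(m1-m2)) \<ge> 0" using assms by simp
  ultimately show False using alg_id[OF assms(1,2), of t] by linarith
qed

context drgl
begin

lemma gq_vec:
  assumes D2: "D = 2" and b0: "b 0 = (t+1)*s" and b1: "b 1 = t*s" and c1: "c 1 = 1" and c2: "c 2 = t+1"
    and s: "s > 0" and p: "p \<in> V"
  shows "\<exists>v. supp V v \<and> v p \<noteq> 0 \<and> Aop V E v = (\<lambda>x. -(real t + 1) * v x) \<and> (\<Sum>x\<in>V. v x) = 0"
proof -
  define w :: "nat \<Rightarrow> real" where "w = (\<lambda>i. if i = 0 then -(real s * real s) else if i = 1 then real s else -1)"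
  define v where "v = (\<lambda>x. if x \<in> V then w (d p x) else 0)"
  have b2: "b 2 = 0"
  proof -
    obtain x y where xy: "x \<in> V" "y \<in> V" "d x y = 2" using drg D2 unfolding distance_regular_def by blast
    have c3: "card {z\<in>V. E y z \<and> d x z = 3} = b 2" using cnt_b[OF xy] by simp
    have e: "{z\<in>V. E y z \<and> d x z = 3} = {}" using d_bound xy(1) D2 by fastforce
    show ?thesis using c3 unfolding e by simp
  qed
  have sv: "supp V v" by (simp add: supp_def v_def)
  have vp: "v p \<noteq> 0" using p s by (simp add: v_def w_def d_0)
  have Av: "Aop V E v = (\<lambda>x. -(real t + 1) * v x)"
  proof
    fix x
    show "Aop V E v x = -(real t + 1) * v x"
    proof (cases "x \<in> V")
      case False then show ?thesis by (simp add: Aop_def v_def)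
    next
      case x: True
      have "Aop V E v x = (\<Sum>z\<in>{z\<in>V. E x z}. w (d z p))"
        unfolding Aop_N[OF x] by (intro sum.cong refl) (auto simp: v_def d_sym[OF _ p])
      also have "\<dots> = F w (d x p)" by (rule NSUM(1)[OF x p])
      finally have A: "Aop V E v x = F w (d x p)" .
      have vx: "v x = w (d x p)" using x p by (simp add: v_def d_sym)
      have "d x p \<le> 2" using d_bound[OF x p] D2 by simp
      then consider "d x p = 0" | "d x p = 1" | "d x p = 2" by linarith
      then show ?thesis
      proof cases
        case 1 then show ?thesis unfolding A vx F_def cc_def using b0
          by (simp add: w_def power2_eq_square algebra_simps)
      next
        case 2 then show ?thesis unfolding A vx F_def cc_def using b0 b1 c1
          by (simp add: w_def power2_eq_square algebra_simps)
      next
        case 3 then show ?thesis unfolding A vx F_def cc_def using b0 b2 c2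
          by (simp add: w_def power2_eq_square algebra_simps)
      qed
    qed
  qed
  have "(\<Sum>x\<in>V. 1 * Aop V E v x) = (\<Sum>x\<in>V. Aop V E (\<lambda>_. 1) x * v x)" by (rule Aop_sym[OF sg])
  also have "\<dots> = (\<Sum>x\<in>V. real (b 0) * v x)"
  proof (intro sum.cong refl)
    fix x assume x: "x \<in> V"
    have "Aop V E (\<lambda>_. 1) x = real (card {z\<in>V. E x z})" unfolding Aop_N[OF x] by simp
    then show "Aop V E (\<lambda>_. 1::real) x * v x = real (b 0) * v x" using deg[OF x] by simp
  qed
  finally have "- (real t + 1) * (\<Sum>x\<in>V. v x) = real (b 0) * (\<Sum>x\<in>V. v x)"
    by (simp add: Av sum_distrib_left)
  then have "(real (b 0) + real t + 1) * (\<Sum>x\<in>V. v x) = 0" by (simp add: algebra_simps)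
  then have "(\<Sum>x\<in>V. v x) = 0" by (metis add_nonneg_pos mult_eq_0_iff of_nat_0_le_iff zero_less_one
        less_irrefl add_nonneg_nonneg)
  then show ?thesis using sv vp Av by blast
qed

lemma eig_le: assumes "adj_eigenvalue V E t" shows "t \<le> real (b 0)"
proof -
  obtain f where f: "\<exists>x\<in>V. f x \<noteq> 0" "\<forall>x\<in>V. (\<Sum>y\<in>V. (if E x y then 1 else 0) * f y) = t * f x"
    using assms unfolding adj_eigenvalue_def by blast
  obtain x0 where x0: "x0 \<in> V" "f x0 \<noteq> 0" using f(1) by blast
  define m where "m = Max ((\<lambda>y. \<bar>f y\<bar>) ` V)"
  have "m \<in> (\<lambda>y. \<bar>f y\<bar>) ` V" unfolding m_def using fin x0 by (intro Max_in) auto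
  then obtain x where x: "x \<in> V" "\<bar>f x\<bar> = m" by blast
  have mx: "\<bar>f y\<bar> \<le> \<bar>f x\<bar>" if "y \<in> V" for y using fin that x unfolding m_def by simp
  have pos: "\<bar>f x\<bar> > 0" using mx[OF x0(1)] x0(2) by linarith
  have "\<bar>t\<bar> * \<bar>f x\<bar> = \<bar>\<Sum>y\<in>V. (if E x y then 1 else 0) * f y\<bar>" using f(2) x(1) by (simp add: abs_mult)
  also have "\<dots> \<le> (\<Sum>y\<in>V. \<bar>(if E x y then 1 else 0) * f y\<bar>)" by (rule sum_abs)
  also have "\<dots> \<le> (\<Sum>y\<in>V. if E x y then \<bar>f x\<bar> else 0)"
    by (intro sum_mono) (auto simp: mx)
  also have "\<dots> = real (card {y\<in>V. E x y}) * \<bar>f x\<bar>"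
    using fin by (simp add: sum.inter_filter[symmetric])
  also have "\<dots> = real (b 0) * \<bar>f x\<bar>" using deg[OF x(1)] by simp
  finally have "\<bar>t\<bar> \<le> real (b 0)" using pos by simp
  then show ?thesis by simp
qed

end




lemma decr_strict:
  assumes decr: "\<And>i. i < D \<Longrightarrow> \<theta> (Suc i) < (\<theta> :: nat \<Rightarrow> real) i"
  shows "i < j \<Longrightarrow> j \<le> D \<Longrightarrow> \<theta> j < \<theta> i"
proof (induction j)
  case 0 then show ?case by simp
next
  case (Suc j)
  have "\<theta> (Suc j) < \<theta> j" using decr Suc.prems by simp
  then show ?case using Suc by (cases "i = j") auto
qed

theorem lemma3p2:
  fixes V :: "'a set" and E :: "'a \<Rightarrow> 'a \<Rightarrow> bool"
    and b c :: "nat \<Rightarrow> nat" and D s :: nat and \<theta> :: "nat \<Rightarrow> real"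
  assumes drg: "distance_regular V E b c D"
    and k3: "b 0 \<ge> 3" and D2: "D \<ge> 2"
    and decr: "\<And>i. i < D \<Longrightarrow> \<theta> (Suc i) < \<theta> i"
    and eigs: "{t. adj_eigenvalue V E t} = \<theta> ` {0..D}"
    and c2: "c 2 \<noteq> 1"
    and s: "s > 0"
    and gq: "\<exists>S\<subseteq>V. is_GQ S (induced E S) s (c 2 - 1)"
  shows "\<theta> 1 \<le> (real (b 0) - (real (drg_a b c 1) + 1)) / (real (c 2) - 1) - 1"
proof -
  interpret G: drgl V E b c D by unfold_locales (rule drg)
  obtain S where S: "S \<subseteq> V" "is_GQ S (induced E S) s (c 2 - 1)" using gq by blast
  define t where "t = c 2 - 1"
  define ES where "ES = induced E S"
  obtain b' c' where gqd: "distance_regular S ES b' c' 2" "b' 0 = (t+1)*s" "b' 1 = t*s" "c' 1 = 1" "c' 2 = t+1"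
    and tpos: "0 < t"
    using S(2) unfolding is_GQ_def t_def ES_def by blast
  interpret Q: drgl S ES b' c' 2 by unfold_locales (rule gqd(1))
  have c2t: "c 2 = t + 1" using tpos t_def by simp
  obtain p where p: "p \<in> S" using gqd(1) unfolding distance_regular_def by blast
  have pV: "p \<in> V" using p S(1) by blast
  obtain v where v: "supp S v" "v p \<noteq> 0" "Aop S ES v = (\<lambda>x. -(real t + 1) * v x)" "(\<Sum>x\<in>S. v x) = 0"
    using Q.gq_vec[OF refl gqd(2-5) s p] by blast
  have ES: "x \<in> S \<Longrightarrow> y \<in> S \<Longrightarrow> ES x y = E x y" for x y by (simp add: ES_def induced_def)
  have d2: "G.d x y = 2" if xy: "x \<in> S" "y \<in> S" "x \<noteq> y" "\<not> E x y" for x y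
  proof -
    have xyV: "x \<in> V" "y \<in> V" using xy S(1) by auto
    have "Q.d x y \<le> 2" by (rule Q.d_bound[OF xy(1,2)])
    moreover have "Q.d x y \<noteq> 0" using Q.d_0[OF xy(1,2)] xy(3) by simp
    moreover have "Q.d x y \<noteq> 1" using Q.d_1[OF xy(1,2)] ES[OF xy(1,2)] xy(4) by simp
    ultimately have "Q.d x y = 2" by linarith
    then have "walkn ES 2 x y" using Q.walk_d[OF xy(1,2)] by simp
    then obtain z where "ES x z" "ES z y" by (auto simp: numeral_2_eq_2)
    then have "E x z" "E z y" by (auto simp: ES_def induced_def)
    then have "walkn E 2 x y" by (auto simp: numeral_2_eq_2)
    then have "G.d x y \<le> 2" by (rule G.d_le)
    moreover have "G.d x y \<noteq> 0" using G.d_0[OF xyV] xy(3) by simp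
    moreover have "G.d x y \<noteq> 1" using G.d_1[OF xyV] xy(4) by simp
    ultimately show ?thesis by linarith
  qed
  have eig1: "adj_eigenvalue V E (\<theta> 1)" using eigs D2 by (auto simp: set_eq_iff)
  have eig0: "adj_eigenvalue V E (\<theta> 0)" using eigs D2 by (auto simp: set_eq_iff)
  have lt: "\<theta> 1 < \<theta> 0" using decr[of 0] D2 by simp
  have thk: "\<theta> 1 < real (b 0)" using G.eig_le[OF eig0] lt by linarith
  have inj: "\<theta> j \<noteq> \<theta> 1" if "j \<le> D" "j \<noteq> 1" for j
  proof (cases "j < 1")
    case True then show ?thesis using decr_strict[of D \<theta> j 1, OF decr] D2 by simp
  next
    case False then show ?thesis using decr_strict[of D \<theta> 1 j, OF decr] that by simp
  qed
  obtain f where f: "\<exists>x\<in>V. f x \<noteq> 0" "\<forall>x\<in>V. (\<Sum>y\<in>V. (if E x y then 1 else 0) * f y) = \<theta> 1 * f x"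
    using eig1 unfolding adj_eigenvalue_def by blast
  obtain x0 where x0: "x0 \<in> V" "f x0 \<noteq> 0" using f(1) by blast
  define f' where "f' = (\<lambda>x. if x \<in> V then f x else 0)"
  have f'x0: "f' x0 \<noteq> 0" using x0 by (simp add: f'_def)
  have sf': "supp V f'" by (simp add: supp_def f'_def)
  have Af': "Aop V E f' = (\<lambda>x. \<theta> 1 * f' x)"
  proof
    fix x
    show "Aop V E f' x = \<theta> 1 * f' x"
    proof (cases "x \<in> V")
      case False then show ?thesis by (simp add: Aop_def f'_def)
    next
      case True
      have "Aop V E f' x = (\<Sum>y\<in>V. (if E x y then 1 else 0) * f y)"
        unfolding Aop_alt[OF G.fin True] by (intro sum.cong refl) (simp add: f'_def)
      then show ?thesis using f(2) True by (simp add: f'_def)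
    qed
  qed
  have H: "\<exists>j\<in>{0..D}. t' = \<theta> j" if "adj_eigenvalue V E t'" for t'
    using that eigs by (auto simp: set_eq_iff)
  define r where "r = (\<Prod>j\<in>{0..D}-{1}. [:-\<theta> j, 1:])"
  have ann: "opoly V E ([:-\<theta> 1, 1:] * r) w = (\<lambda>x. 0)" if "supp V w" for w
  proof -
    have "(\<Prod>j\<in>{0..D}. [:-\<theta> j, 1:]) = [:-\<theta> 1, 1:] * r"
      unfolding r_def by (rule prod.remove) (use D2 in auto)
    then show ?thesis using ANN_real[OF G.sg _ H that] by simp
  qed
  have nz: "poly [:-\<theta> j, 1:] (\<theta> 1) \<noteq> 0" if "j \<in> {0..D}-{1}" for j
  proof -
    have "\<theta> j \<noteq> \<theta> 1" using inj that by auto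
    then show ?thesis by simp
  qed
  have rth: "poly r (\<theta> 1) \<noteq> 0"
  proof -
    have fin: "finite ({0..D}-{1})" by simp
    show ?thesis unfolding r_def poly_prod prod_zero_iff[OF fin] using nz by blast
  qed
  obtain \<mu> where mu: "\<mu> 0 > 0" "\<forall>x\<in>V. \<forall>y\<in>V. \<theta> 1 * \<mu> (G.d x y) = G.F \<mu> (G.d x y)"
    "\<forall>g. supp V g \<longrightarrow> 0 \<le> (\<Sum>x\<in>V. \<Sum>y\<in>V. g x * g y * \<mu> (G.d x y))"
    using G.spectral[OF sf' x0(1) f'x0 Af' rth ann] by blast
  have "card {z\<in>S. ES p z} = b' 0" by (rule Q.deg[OF p])
  moreover have "b' 0 > 0" using gqd(2) s by simp
  ultimately have "{z\<in>S. ES p z} \<noteq> {}" by (metis card.empty less_irrefl)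
  then obtain q where q: "q \<in> S" "ES p q" by blast
  have qV: "q \<in> V" using q S(1) by blast
  have Epq: "E p q" using q ES[OF p q(1)] by simp
  have dpq: "G.d p q = 1" using G.d_1[OF pV qV] Epq by simp
  have dpp: "G.d p p = 0" using G.d_0[OF pV pV] by simp
  have c1: "c 1 = 1"
  proof -
    have "{z\<in>V. E q z \<and> G.d p z + 1 = 1} = {p}" using G.d_0 pV G.EV G.Esym[OF Epq] by auto
    then show ?thesis using G.cnt_c[OF pV qV dpq] by simp
  qed
  have bnd: "c 1 + b 1 \<le> b 0" using G.NSUM(2)[OF pV qV] dpq by (simp add: G.cc_def)
  have rel0: "\<theta> 1 * \<mu> 0 = real (b 0) * \<mu> 1"
  proof -
    have "\<theta> 1 * \<mu> (G.d p p) = G.F \<mu> (G.d p p)" using mu(2) pV by blast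
    then show ?thesis unfolding dpp G.F_def G.cc_def by simp
  qed
  have rel1: "\<theta> 1 * \<mu> 1 = \<mu> 0 + real (b 1) * \<mu> 2 + (real (b 0) - 1 - real (b 1)) * \<mu> 1"
  proof -
    have "\<theta> 1 * \<mu> (G.d p q) = G.F \<mu> (G.d p q)" using mu(2) pV qV by blast
    then show ?thesis unfolding dpq G.F_def G.cc_def using c1 by (simp add: algebra_simps numeral_2_eq_2)
  qed
  define K where "K = \<mu> 0 - \<mu> 2 - (real t + 1) * (\<mu> 1 - \<mu> 2)"
  have svV: "supp V v" using v(1) S(1) by (auto simp: supp_def)
  have inner: "(\<Sum>y\<in>S. v y * \<mu> (G.d x y)) = K * v x" if x: "x \<in> S" for x
  proof -
    have xV: "x \<in> V" using x S(1) by blast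
    have pt: "v y * \<mu> (G.d x y) = \<mu> 2 * v y + (if y = x then (\<mu> 0 - \<mu> 2) * v y else 0)
              + (if ES x y then (\<mu> 1 - \<mu> 2) * v y else 0)" if y: "y \<in> S" for y
    proof -
      have yV: "y \<in> V" using y S(1) by blast
      consider "y = x" | "y \<noteq> x" "E x y" | "y \<noteq> x" "\<not> E x y" by blast
      then show ?thesis
      proof cases
        case 1 then show ?thesis using G.d_0[OF xV xV] G.Eirr ES[OF x x] by (simp add: algebra_simps)
      next
        case 2 then show ?thesis using G.d_1[OF xV yV] ES[OF x y] by (simp add: algebra_simps)
      next
        case 3 then show ?thesis using d2[OF x y] ES[OF x y] by simp
      qed
    qed
    have "(\<Sum>y\<in>S. v y * \<mu> (G.d x y)) = \<mu> 2 * (\<Sum>y\<in>S. v y) + (\<Sum>y\<in>S. if y = x then (\<mu> 0 - \<mu> 2) * v y else 0)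
          + (\<mu> 1 - \<mu> 2) * (\<Sum>y\<in>S. if ES x y then v y else 0)"
    proof -
      have "(\<Sum>y\<in>S. v y * \<mu> (G.d x y)) = (\<Sum>y\<in>S. \<mu> 2 * v y + (if y = x then (\<mu> 0 - \<mu> 2) * v y else 0)
              + (if ES x y then (\<mu> 1 - \<mu> 2) * v y else 0))" by (rule sum.cong[OF refl pt])
      also have "\<dots> = \<mu> 2 * (\<Sum>y\<in>S. v y) + (\<Sum>y\<in>S. if y = x then (\<mu> 0 - \<mu> 2) * v y else 0)
              + (\<Sum>y\<in>S. if ES x y then (\<mu> 1 - \<mu> 2) * v y else 0)" by (simp only: sum.distrib sum_distrib_left)
      also have "(\<Sum>y\<in>S. if ES x y then (\<mu> 1 - \<mu> 2) * v y else 0) = (\<mu> 1 - \<mu> 2) * (\<Sum>y\<in>S. if ES x y then v y else 0)"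
        by (subst sum_distrib_left) (intro sum.cong refl, simp)
      finally show ?thesis .
    qed
    also have "(\<Sum>y\<in>S. if y = x then (\<mu> 0 - \<mu> 2) * v y else 0) = (\<mu> 0 - \<mu> 2) * v x"
      using Q.fin x by simp
    also have "(\<Sum>y\<in>S. if ES x y then v y else 0) = Aop S ES v x"
      by (rule Aop_alt[OF Q.fin x, symmetric])
    finally show ?thesis using v(3,4) by (simp add: K_def algebra_simps)
  qed
  have "(\<Sum>x\<in>V. \<Sum>y\<in>V. v x * v y * \<mu> (G.d x y)) = (\<Sum>x\<in>S. \<Sum>y\<in>S. v x * v y * \<mu> (G.d x y))"
  proof -
    have "(\<Sum>x\<in>V. \<Sum>y\<in>V. v x * v y * \<mu> (G.d x y)) = (\<Sum>x\<in>S. \<Sum>y\<in>V. v x * v y * \<mu> (G.d x y))"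
      by (rule sum.mono_neutral_right[OF G.fin S(1)]) (use v(1) in \<open>auto simp: supp_def\<close>)
    also have "\<dots> = (\<Sum>x\<in>S. \<Sum>y\<in>S. v x * v y * \<mu> (G.d x y))"
      by (intro sum.cong refl sum.mono_neutral_right[OF G.fin S(1)]) (use v(1) in \<open>auto simp: supp_def\<close>)
    finally show ?thesis .
  qed
  also have "\<dots> = (\<Sum>x\<in>S. v x * (K * v x))"
  proof (intro sum.cong refl)
    fix x assume x: "x \<in> S"
    show "(\<Sum>y\<in>S. v x * v y * \<mu> (G.d x y)) = v x * (K * v x)"
      using inner[OF x] by (simp add: sum_distrib_left[symmetric] mult.assoc)
  qed
  also have "\<dots> = K * (\<Sum>x\<in>S. v x * v x)" by (simp add: sum_distrib_left mult_ac)
  finally have eqQ: "(\<Sum>x\<in>V. \<Sum>y\<in>V. v x * v y * \<mu> (G.d x y)) = K * (\<Sum>x\<in>S. v x * v x)" .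
  have nn: "0 \<le> (\<Sum>x\<in>V. \<Sum>y\<in>V. v x * v y * \<mu> (G.d x y))" using mu(3) svV by blast
  have "0 \<le> K * (\<Sum>x\<in>S. v x * v x)" using nn unfolding eqQ .
  moreover have "(\<Sum>x\<in>S. v x * v x) > 0"
  proof -
    have "v p * v p \<le> (\<Sum>x\<in>S. v x * v x)" by (rule member_le_sum) (use p Q.fin in auto)
    moreover have "v p * v p > 0" using v(2) by (metis not_real_square_gt_zero)
    ultimately show ?thesis by linarith
  qed
  ultimately have K0: "0 \<le> K" by (simp add: zero_le_mult_iff)
  have "real t * \<theta> 1 \<le> real (b 1) - real t"
    by (rule alg[OF rel0 _ _ mu(1) thk]) (use rel1 K0 k3 in \<open>auto simp: K_def\<close>)
  then have "\<theta> 1 \<le> real (b 1) / real t - 1" using tpos by (simp add: field_simps)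
  moreover have "real (drg_a b c 1) = real (b 0) - real (b 1) - 1"
    using bnd c1 by (simp add: drg_a_def of_nat_diff)
  moreover have "real (c 2) - 1 = real t" using c2t by simp
  ultimately show ?thesis by simp
qed


end
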